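(* Let $\mathcal H_A,\mathcal H_B$ be finite-dimensional with $d_B=\dim\mathcal H_B$, and let $|\Psi\rangle=\sum_{i=1}^{d_B}\lambda_i|\phi_i^A\rangle\otimes|\xi_i^B\rangle$ be a pure state with full Schmidt rank, i.e. $\{|\phi_i^A\rangle\}$ orthonormal in $\mathcal H_A$, $\{|\xi_i^B\rangle\}$ an orthonormal basis of $\mathcal H_B$, and $\lambda_i\neq 0$ for all $i$. Then the maximal steered coherence of $|\Psi\rangle\langle\Psi|$ attains the largest possible value, namely $\mathcal C(|\Psi\rangle\langle\Psi|)=d_B-1$, the coherence of the maximally coherent state $\frac{1}{\sqrt{d_B}}\sum_{i=1}^{d_B}|\xi_i^B\rangle$.
   Context: For a bipartite state $\rho$ and a POVM element $M$ on $\mathcal H_A$ ($0\le M\le \mathbb 1$) with $p_M:=\mathrm{tr}(M\otimes\mathbb 1\,\rho)>0$, Bob's steered state is $\rho_B^M:=\mathrm{tr}_A(M\otimes\mathbb 1\,\rho)/p_M$. The $\ell_1$-coherence of a state $\sigma$ in an orthonormal basis $\Xi=\{|\xi_i\rangle\}$ is $C(\sigma,\Xi)=\sum_{i\neq j}|\langle\xi_i|\sigma|\xi_j\rangle|$; for a $d_B$-dimensional system it is at most $d_B-1$. The maximal steered coherence is $$\mathcal C(\rho)=\inf_{\Xi}\ \max_{M}\ \frac{1}{p_M}\sum_{i\neq j}\big|\langle\xi_i|\mathrm{tr}_A(M\otimes \mathbb 1\,\rho)|\xi_j\rangle\big|,$$ where the infimum is over all orthonormal eigenbases $\Xi$ of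 $\rho_B=\mathrm{tr}_A\rho$ (unique up to phases when $\rho_B$ is non-degenerate) and the maximum is over POVM elements $M$ on $\mathcal H_A$ with $p_M>0$. *)

theory Defs
  imports Complex_Main
begin

text \<open>H_A = C^dA, H_B = C^dB with computational bases indexed by
  {0..<dA}, {0..<dB}. Vectors are functions nat => complex (only indices below the
  dimension matter); operators on C^n are matrices nat => nat => complex; operators
  on H_A (x) H_B are functions (nat*nat) => (nat*nat) => complex, entry
  rho (a,b) (a',b') = <a,b| rho |a',b'>.\<close>

definition inner_vec :: "nat \<Rightarrow> (nat \<Rightarrow> complex) \<Rightarrow> (nat \<Rightarrow> complex) \<Rightarrow> complex" where
  "inner_vec n u v = (\<Sum>k<n. cnj (u k) * v k)"

definition orthonormal_family :: "nat \<Rightarrow> nat \<Rightarrow> (nat \<Rightarrow> nat \<Rightarrow> complex) \<Rightarrow> bool" where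
  "orthonormal_family n m e \<longleftrightarrow>
     (\<forall>i<m. \<forall>j<m. inner_vec n (e i) (e j) = (if i = j then 1 else 0))"

definition qform :: "nat \<Rightarrow> (nat \<Rightarrow> nat \<Rightarrow> complex) \<Rightarrow> (nat \<Rightarrow> complex) \<Rightarrow> complex" where
  "qform n M v = (\<Sum>a<n. \<Sum>a'<n. cnj (v a) * M a a' * v a')"

definition povm_element :: "nat \<Rightarrow> (nat \<Rightarrow> nat \<Rightarrow> complex) \<Rightarrow> bool" where
  "povm_element n M \<longleftrightarrow>
     (\<forall>v. qform n M v \<in> \<real> \<and> 0 \<le> Re (qform n M v) \<and>
          Re (qform n M v) \<le> Re (inner_vec n v v))"

definition ptrace_A :: "nat \<Rightarrow> ((nat \<times> nat) \<Rightarrow> (nat \<times> nat) \<Rightarrow> complex) \<Rightarrow> nat \<Rightarrow> nat \<Rightarrow> complex" where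
  "ptrace_A dA \<rho> b b' = (\<Sum>a<dA. \<rho> (a, b) (a, b'))"

text \<open>Unnormalised steered operator tr_A((M (x) 1) rho).\<close>
definition steered_unnorm :: "nat \<Rightarrow> (nat \<Rightarrow> nat \<Rightarrow> complex) \<Rightarrow> ((nat \<times> nat) \<Rightarrow> (nat \<times> nat) \<Rightarrow> complex)
    \<Rightarrow> nat \<Rightarrow> nat \<Rightarrow> complex" where
  "steered_unnorm dA M \<rho> b b' = (\<Sum>a<dA. \<Sum>a'<dA. M a a' * \<rho> (a', b) (a, b'))"

definition prob_M :: "nat \<Rightarrow> nat \<Rightarrow> (nat \<Rightarrow> nat \<Rightarrow> complex) \<Rightarrow> ((nat \<times> nat) \<Rightarrow> (nat \<times> nat) \<Rightarrow> complex) \<Rightarrow> real" where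
  "prob_M dA dB M \<rho> = Re (\<Sum>b<dB. steered_unnorm dA M \<rho> b b)"

definition mat_elem :: "nat \<Rightarrow> (nat \<Rightarrow> complex) \<Rightarrow> (nat \<Rightarrow> nat \<Rightarrow> complex) \<Rightarrow> (nat \<Rightarrow> complex) \<Rightarrow> complex" where
  "mat_elem n u X v = (\<Sum>b<n. \<Sum>b'<n. cnj (u b) * X b b' * v b')"

definition l1_coh :: "nat \<Rightarrow> (nat \<Rightarrow> nat \<Rightarrow> complex) \<Rightarrow> (nat \<Rightarrow> nat \<Rightarrow> complex) \<Rightarrow> real" where
  "l1_coh n X \<xi> = (\<Sum>i<n. \<Sum>j<n. if i \<noteq> j then cmod (mat_elem n (\<xi> i) X (\<xi> j)) else 0)"

definition orthonormal_eigenbasis :: "nat \<Rightarrow> (nat \<Rightarrow> nat \<Rightarrow> complex) \<Rightarrow> (nat \<Rightarrow> nat \<Rightarrow> complex) \<Rightarrow> bool" where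
  "orthonormal_eigenbasis n X \<xi> \<longleftrightarrow>
     orthonormal_family n n \<xi> \<and>
     (\<forall>i<n. \<exists>\<mu>. \<forall>b<n. (\<Sum>b'<n. X b b' * \<xi> i b') = \<mu> * \<xi> i b)"

definition max_steered_coherence :: "nat \<Rightarrow> nat \<Rightarrow> ((nat \<times> nat) \<Rightarrow> (nat \<times> nat) \<Rightarrow> complex) \<Rightarrow> real" where
  "max_steered_coherence dA dB \<rho> =
     (INF \<xi> \<in> {\<xi>. orthonormal_eigenbasis dB (ptrace_A dA \<rho>) \<xi>}.
        SUP M \<in> {M. povm_element dA M \<and> prob_M dA dB M \<rho> > 0}.
          l1_coh dB (steered_unnorm dA M \<rho>) \<xi> / prob_M dA dB M \<rho>)"

text \<open>The projector |Psi><Psi| for Psi = sum_{a,b} psi a b |a>|b>.\<close>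
definition proj_pure :: "(nat \<Rightarrow> nat \<Rightarrow> complex) \<Rightarrow> (nat \<times> nat) \<Rightarrow> (nat \<times> nat) \<Rightarrow> complex" where
  "proj_pure \<psi> x y = \<psi> (fst x) (snd x) * cnj (\<psi> (fst y) (snd y))"

end

theory Submission
  imports Defs "Jordan_Normal_Form.Determinant" "HOL-Analysis.L2_Norm"
begin


lemma onb_complete:
  assumes "orthonormal_family n n e" "i < n" "j < n"
  shows "(\<Sum>k<n. cnj (e k i) * e k j) = (if i = j then 1 else 0)"
proof -
  define Q :: "complex mat" where "Q = mat n n (\<lambda>(k,b). e k b)"
  define Qh :: "complex mat" where "Qh = mat n n (\<lambda>(b,k). cnj (e k b))"
  have QC: "Q \<in> carrier_mat n n" "Qh \<in> carrier_mat n n" by (auto simp: Q_def Qh_def)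
  have "Q * Qh = 1\<^sub>m n"
  proof (rule eq_matI)
    fix a b assume ab: "a < dim_row (1\<^sub>m n)" "b < dim_col (1\<^sub>m n)"
    have "(Q * Qh) $$ (a, b) = (\<Sum>k<n. e a k * cnj (e b k))"
      using ab by (simp add: Q_def Qh_def scalar_prod_def lessThan_atLeast0 row_def col_def)
    also have "\<dots> = inner_vec n (e b) (e a)" unfolding inner_vec_def by (simp add: mult.commute)
    also have "\<dots> = 1\<^sub>m n $$ (a, b)" using assms(1) ab unfolding orthonormal_family_def by auto
    finally show "(Q * Qh) $$ (a, b) = 1\<^sub>m n $$ (a, b)" .
  qed (auto simp: Q_def Qh_def)
  then have "Qh * Q = 1\<^sub>m n" using mat_mult_left_right_inverse QC by blast
  then have "(Qh * Q) $$ (i, j) = 1\<^sub>m n $$ (i,j)" by simp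
  then show ?thesis using assms(2,3)
    by (simp add: Q_def Qh_def scalar_prod_def lessThan_atLeast0 row_def col_def)
qed



lemma trace_inv:
  assumes "orthonormal_family n n e"
  shows "(\<Sum>i<n. mat_elem n (e i) X (e i)) = (\<Sum>b<n. X b b)"
proof -
  have "(\<Sum>i<n. mat_elem n (e i) X (e i)) = (\<Sum>i<n. \<Sum>b<n. \<Sum>b'<n. X b b' * (cnj (e i b) * e i b'))"
    unfolding mat_elem_def by (intro sum.cong refl) (simp add: mult.commute mult.left_commute)
  also have "\<dots> = (\<Sum>b<n. \<Sum>i<n. \<Sum>b'<n. X b b' * (cnj (e i b) * e i b'))"
    by (rule sum.swap)
  also have "\<dots> = (\<Sum>b<n. \<Sum>b'<n. \<Sum>i<n. X b b' * (cnj (e i b) * e i b'))"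
    by (rule sum.cong[OF refl]) (rule sum.swap)
  also have "\<dots> = (\<Sum>b<n. \<Sum>b'<n. X b b' * (if b = b' then 1 else 0))"
    by (intro sum.cong refl) (simp add: sum_distrib_left[symmetric] onb_complete[OF assms])
  also have "\<dots> = (\<Sum>b<n. X b b)" by (simp add: if_distrib cong: if_cong)
  finally show ?thesis .
qed

definition Bf :: "nat \<Rightarrow> (nat \<Rightarrow> nat \<Rightarrow> complex) \<Rightarrow> (nat \<Rightarrow> complex) \<Rightarrow> (nat \<Rightarrow> complex) \<Rightarrow> complex" where
  "Bf n M u v = (\<Sum>a<n. \<Sum>a'<n. cnj (u a) * M a a' * v a')"

lemma mat_elem_steered:
  "mat_elem dB (e i) (steered_unnorm dA M (proj_pure \<psi>)) (e j)
   = Bf dA M (\<lambda>a. \<Sum>b<dB. \<psi> a b * cnj (e j b)) (\<lambda>a. \<Sum>b<dB. \<psi> a b * cnj (e i b))"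
proof -
  define T where "T = (\<lambda>b b' a a'. cnj (e i b) * M a a' * \<psi> a' b * cnj (\<psi> a b') * e j b')"
  have "mat_elem dB (e i) (steered_unnorm dA M (proj_pure \<psi>)) (e j)
        = (\<Sum>b<dB. \<Sum>b'<dB. \<Sum>a<dA. \<Sum>a'<dA. T b b' a a')"
    unfolding mat_elem_def steered_unnorm_def proj_pure_def T_def
    by (simp add: sum_distrib_left sum_distrib_right mult.assoc)
  also have "\<dots> = (\<Sum>b<dB. \<Sum>a<dA. \<Sum>b'<dB. \<Sum>a'<dA. T b b' a a')"
    by (rule sum.cong[OF refl]) (rule sum.swap)
  also have "\<dots> = (\<Sum>b<dB. \<Sum>a<dA. \<Sum>a'<dA. \<Sum>b'<dB. T b b' a a')"
    by (rule sum.cong[OF refl], rule sum.cong[OF refl]) (rule sum.swap)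
  also have "\<dots> = (\<Sum>a<dA. \<Sum>b<dB. \<Sum>a'<dA. \<Sum>b'<dB. T b b' a a')"
    by (rule sum.swap)
  also have "\<dots> = (\<Sum>a<dA. \<Sum>a'<dA. \<Sum>b<dB. \<Sum>b'<dB. T b b' a a')"
    by (rule sum.cong[OF refl]) (rule sum.swap)
  also have "\<dots> = (\<Sum>a<dA. \<Sum>a'<dA. \<Sum>b'<dB. \<Sum>b<dB. T b b' a a')"
    by (rule sum.cong[OF refl], rule sum.cong[OF refl]) (rule sum.swap)
  also have "\<dots> = Bf dA M (\<lambda>a. \<Sum>b<dB. \<psi> a b * cnj (e j b)) (\<lambda>a. \<Sum>b<dB. \<psi> a b * cnj (e i b))"
    unfolding Bf_def T_def
    by (simp add: sum_distrib_left sum_distrib_right mult.commute mult.left_commute)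
  finally show ?thesis .
qed

lemma qform_expand:
  "qform n M (\<lambda>a. u a + w * v a) = Bf n M u u + w * Bf n M u v + cnj w * Bf n M v u + cnj w * w * Bf n M v v"
  unfolding qform_def Bf_def
  by (simp add: sum.distrib sum_distrib_left algebra_simps)


lemma qform_Bf: "qform n M v = Bf n M v v" unfolding qform_def Bf_def ..

lemma Bf_bound:
  assumes "povm_element n M"
  shows "cmod (Bf n M u v) \<le> (Re (qform n M u) + Re (qform n M v)) / 2"
proof -
  let ?p = "Bf n M u v" and ?q = "Bf n M v u" and ?A = "Bf n M u u" and ?B = "Bf n M v v"
  have real: "\<And>x. Im (qform n M x) = 0" using assms unfolding povm_element_def
    by (metis complex_is_Real_iff)
  have pos: "\<And>x. 0 \<le> Re (qform n M x)" using assms unfolding povm_element_def by blast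
  have iA: "Im ?A = 0" "Im ?B = 0" using real qform_Bf by metis+
  have e1: "Im (?A + ?p + ?q + ?B) = 0" using real[of "\<lambda>a. u a + 1 * v a"] qform_expand[of n M u 1 v] by simp
  have e2: "Im (?A + \<i> * ?p - \<i> * ?q + ?B) = 0" using real[of "\<lambda>a. u a + \<i> * v a"] qform_expand[of n M u \<i> v] by simp
  have q: "?q = cnj ?p" using e1 e2 iA by (simp add: complex_eq_iff)
  show ?thesis
  proof (cases "?p = 0")
    case True then show ?thesis using pos[of u] pos[of v] by simp
  next
    case False
    define w where "w = - cnj ?p / cmod ?p"
    have np: "cmod ?p \<noteq> 0" using False by simp
    have cc: "cnj ?p * ?p = of_real (cmod ?p) * of_real (cmod ?p)"
      using complex_norm_square[of "?p"] by (simp add: mult.commute power2_eq_square)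
    have cc2: "?p * cnj ?p = of_real (cmod ?p) * of_real (cmod ?p)"
      using cc by (simp add: mult.commute)
    have w1: "cnj w * w = 1" using np unfolding w_def
      by (simp add: cc cc2)
    have wp: "w * ?p = - cmod ?p" unfolding w_def using np
      by (simp add: cc)
    have wq: "cnj w * ?q = - cmod ?p" using q wp
      by (metis complex_cnj_mult complex_cnj_complex_of_real complex_cnj_minus)
    have "Re (w * ?p + cnj w * ?q) = - 2 * cmod ?p" using wp wq by simp
    moreover have "0 \<le> Re (qform n M (\<lambda>a. u a + w * v a))" by (rule pos)
    ultimately show ?thesis unfolding qform_expand w1 using qform_Bf[of n M u] qform_Bf[of n M v] by simp
  qed
qed


lemma offdiag_row:
  fixes g :: "nat \<Rightarrow> real"
  assumes "i < n"
  shows "(\<Sum>j<n. if i \<noteq> j then g j else 0) = (\<Sum>j<n. g j) - g i"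
proof -
  have "(\<Sum>j<n. if i \<noteq> j then g j else 0) = (\<Sum>j<n. g j - (if i = j then g j else 0))"
    by (rule sum.cong) auto
  also have "\<dots> = (\<Sum>j<n. g j) - (\<Sum>j<n. if i = j then g j else 0)"
    by (rule sum_subtractf)
  also have "(\<Sum>j<n. if i = j then g j else 0) = g i" using assms by (simp add: sum.delta)
  finally show ?thesis .
qed

lemma offdiag_sum:
  fixes r :: "nat \<Rightarrow> real"
  shows "(\<Sum>i<n. \<Sum>j<n. if i \<noteq> j then (r i + r j)/2 else 0) = (real n - 1) * (\<Sum>i<n. r i)"
proof -
  have "(\<Sum>i<n. \<Sum>j<n. if i \<noteq> j then (r i + r j)/2 else 0)
      = (\<Sum>i<n. (\<Sum>j<n. (r i + r j)/2) - (\<Sum>j<n. if i = j then r i else 0))"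
    by (rule sum.cong[OF refl]) (simp add: offdiag_row[of _ _ "\<lambda>j. (r _ + r j)/2"])
  also have "\<dots> = (\<Sum>i<n. (real n * r i + (\<Sum>j<n. r j)) / 2 - r i)"
    by (rule sum.cong[OF refl]) (simp add: sum.distrib sum_divide_distrib[symmetric])
  also have "\<dots> = (real n - 1) * (\<Sum>i<n. r i)"
    by (simp add: sum_subtractf sum_divide_distrib[symmetric] sum.distrib sum_distrib_left[symmetric] algebra_simps)
  finally show ?thesis .
qed

lemma upper_bound:
  assumes onb: "orthonormal_family dB dB \<eta>" and povm: "povm_element dA M"
  shows "l1_coh dB (steered_unnorm dA M (proj_pure \<psi>)) \<eta> \<le> (real dB - 1) * prob_M dA dB M (proj_pure \<psi>)"
proof -
  define X where "X = steered_unnorm dA M (proj_pure \<psi>)"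
  define y where "y = (\<lambda>k a. \<Sum>b<dB. \<psi> a b * cnj (\<eta> k b))"
  define r where "r = (\<lambda>k. Re (qform dA M (y k)))"
  have m: "\<And>i j. mat_elem dB (\<eta> i) X (\<eta> j) = Bf dA M (y j) (y i)"
    unfolding X_def y_def by (rule mat_elem_steered)
  have mb: "cmod (mat_elem dB (\<eta> i) X (\<eta> j)) \<le> (r i + r j)/2" for i j
    using Bf_bound[OF povm, of "y j" "y i"] unfolding m r_def by (simp add: add.commute)
  have "l1_coh dB X \<eta> \<le> (\<Sum>i<dB. \<Sum>j<dB. if i \<noteq> j then (r i + r j)/2 else 0)"
    unfolding l1_coh_def using mb by (intro sum_mono) fastforce
  also have "\<dots> = (real dB - 1) * (\<Sum>i<dB. r i)" by (rule offdiag_sum)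
  also have "(\<Sum>i<dB. r i) = Re (\<Sum>i<dB. mat_elem dB (\<eta> i) X (\<eta> i))"
    by (simp add: m r_def qform_Bf)
  also have "\<dots> = prob_M dA dB M (proj_pure \<psi>)"
    unfolding prob_M_def trace_inv[OF onb] X_def ..
  finally show ?thesis unfolding X_def .
qed



lemma Bf_rank1:
  "Bf n (\<lambda>a a'. cnj (u a) * u a' / of_real K) x z
   = cnj (\<Sum>a<n. u a * x a) * (\<Sum>a'<n. u a' * z a') / of_real K"
  unfolding Bf_def by (simp add: sum_distrib_left sum_distrib_right sum_divide_distrib mult_ac)

lemma inner_self: "Re (inner_vec n v v) = (\<Sum>a<n. (cmod (v a))^2)"
proof -
  have "\<And>z. Re (cnj z * z) = (cmod z)^2"
    by (metis Re_complex_of_real complex_norm_square mult.commute)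
  then show ?thesis unfolding inner_vec_def by (simp add: Re_sum)
qed

lemma cs_complex:
  fixes u v :: "nat \<Rightarrow> complex"
  shows "(cmod (\<Sum>a<n. u a * v a))^2 \<le> (\<Sum>a<n. (cmod (u a))^2) * (\<Sum>a<n. (cmod (v a))^2)"
proof -
  have "cmod (\<Sum>a<n. u a * v a) \<le> (\<Sum>a<n. \<bar>cmod (u a)\<bar> * \<bar>cmod (v a)\<bar>)"
    by (rule order_trans[OF norm_sum]) (simp add: norm_mult)
  also have "\<dots> \<le> L2_set (\<lambda>a. cmod (u a)) {..<n} * L2_set (\<lambda>a. cmod (v a)) {..<n}"
    by (rule L2_set_mult_ineq)
  finally have h: "cmod (\<Sum>a<n. u a * v a) \<le> L2_set (\<lambda>a. cmod (u a)) {..<n} * L2_set (\<lambda>a. cmod (v a)) {..<n}" .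
  have "(cmod (\<Sum>a<n. u a * v a))^2 \<le> (L2_set (\<lambda>a. cmod (u a)) {..<n} * L2_set (\<lambda>a. cmod (v a)) {..<n})^2"
    by (rule power_mono[OF h norm_ge_zero])
  also have "\<dots> = (\<Sum>a<n. (cmod (u a))^2) * (\<Sum>a<n. (cmod (v a))^2)"
    unfolding L2_set_def power_mult_distrib by (simp add: sum_nonneg)
  finally show ?thesis .
qed

lemma povm_rank1:
  assumes K: "K = (\<Sum>a<n. (cmod (u a))^2)" "K > 0"
  shows "povm_element n (\<lambda>a a'. cnj (u a) * u a' / of_real K)"
  unfolding povm_element_def
proof (intro allI conjI)
  fix v
  define S where "S = (\<Sum>a<n. u a * v a)"
  have q: "qform n (\<lambda>a a'. cnj (u a) * u a' / of_real K) v = of_real ((cmod S)^2 / K)"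
    unfolding qform_Bf Bf_rank1 S_def[symmetric]
    by (metis complex_norm_square mult.commute of_real_divide)
  show "qform n (\<lambda>a a'. cnj (u a) * u a' / of_real K) v \<in> \<real>" unfolding q by simp
  show "0 \<le> Re (qform n (\<lambda>a a'. cnj (u a) * u a' / of_real K) v)" unfolding q using K by simp
  have "(cmod S)^2 \<le> K * (\<Sum>a<n. (cmod (v a))^2)" unfolding S_def K(1) by (rule cs_complex)
  then have "(cmod S)^2 / K \<le> (\<Sum>a<n. (cmod (v a))^2)" using K(2)
    by (simp add: divide_le_eq mult.commute)
  then show "Re (qform n (\<lambda>a a'. cnj (u a) * u a' / of_real K) v) \<le> Re (inner_vec n v v)"
    unfolding q inner_self by simp
qed




lemma attain:
  assumes phi_on: "orthonormal_family dA dB \<phi>"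
    and xi_onb: "orthonormal_family dB dB \<xi>"
    and lam_nz: "\<forall>i<dB. lam i \<noteq> 0"
    and schmidt: "\<forall>a<dA. \<forall>b<dB. \<psi> a b = (\<Sum>i<dB. complex_of_real (lam i) * \<phi> i a * \<xi> i b)"
    and onb: "orthonormal_family dB dB \<eta>" and dpos: "0 < dB"
  shows "\<exists>M. povm_element dA M \<and> 0 < prob_M dA dB M (proj_pure \<psi>) \<and>
     l1_coh dB (steered_unnorm dA M (proj_pure \<psi>)) \<eta> / prob_M dA dB M (proj_pure \<psi>) = real dB - 1"
proof -
  define w where "w = (\<lambda>b. \<Sum>k<dB. \<eta> k b)"
  have c1: "(\<Sum>b<dB. w b * cnj (\<eta> i b)) = 1" if "i < dB" for i
  proof -
    have "(\<Sum>b<dB. w b * cnj (\<eta> i b)) = (\<Sum>k<dB. inner_vec dB (\<eta> i) (\<eta> k))"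
    proof -
      have "(\<Sum>b<dB. w b * cnj (\<eta> i b)) = (\<Sum>b<dB. \<Sum>k<dB. cnj (\<eta> i b) * \<eta> k b)"
        unfolding w_def sum_distrib_right by (simp add: mult.commute)
      also have "\<dots> = (\<Sum>k<dB. \<Sum>b<dB. cnj (\<eta> i b) * \<eta> k b)" by (rule sum.swap)
      finally show ?thesis unfolding inner_vec_def .
    qed
    also have "\<dots> = (\<Sum>k<dB. if i = k then 1 else 0)"
      using onb that unfolding orthonormal_family_def by (intro sum.cong) auto
    also have "\<dots> = 1" using that by simp
    finally show ?thesis .
  qed
  define \<alpha> where "\<alpha> = (\<lambda>j. (\<Sum>b<dB. cnj (\<xi> j b) * w b) / of_real (lam j))"
  define u where "u = (\<lambda>a. \<Sum>j<dB. \<alpha> j * cnj (\<phi> j a))"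
  have key: "(\<Sum>a<dA. u a * \<psi> a b) = w b" if b: "b < dB" for b
  proof -
    have "(\<Sum>a<dA. u a * \<psi> a b) = (\<Sum>a<dA. \<Sum>i<dB. \<Sum>j<dB. \<alpha> j * of_real (lam i) * \<xi> i b * (cnj (\<phi> j a) * \<phi> i a))"
      unfolding u_def using schmidt b
      by (intro sum.cong refl) (simp add: sum_distrib_left sum_distrib_right mult_ac)
    also have "\<dots> = (\<Sum>a<dA. \<Sum>j<dB. \<Sum>i<dB. \<alpha> j * of_real (lam i) * \<xi> i b * (cnj (\<phi> j a) * \<phi> i a))"
      by (rule sum.cong[OF refl]) (rule sum.swap)
    also have "\<dots> = (\<Sum>j<dB. \<Sum>a<dA. \<Sum>i<dB. \<alpha> j * of_real (lam i) * \<xi> i b * (cnj (\<phi> j a) * \<phi> i a))"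
      by (rule sum.swap)
    also have "\<dots> = (\<Sum>j<dB. \<Sum>i<dB. \<Sum>a<dA. \<alpha> j * of_real (lam i) * \<xi> i b * (cnj (\<phi> j a) * \<phi> i a))"
      by (rule sum.cong[OF refl]) (rule sum.swap)
    also have "\<dots> = (\<Sum>j<dB. \<Sum>i<dB. \<alpha> j * of_real (lam i) * \<xi> i b * inner_vec dA (\<phi> j) (\<phi> i))"
      unfolding inner_vec_def by (simp add: sum_distrib_left)
    also have "\<dots> = (\<Sum>j<dB. \<Sum>i<dB. if j = i then \<alpha> j * of_real (lam i) * \<xi> i b else 0)"
      using phi_on unfolding orthonormal_family_def by (intro sum.cong refl) auto
    also have "\<dots> = (\<Sum>j<dB. \<alpha> j * of_real (lam j) * \<xi> j b)"
      by simp
    also have "\<dots> = (\<Sum>j<dB. \<Sum>b'<dB. w b' * (cnj (\<xi> j b') * \<xi> j b))"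
      using lam_nz unfolding \<alpha>_def by (intro sum.cong refl) (simp add: sum_distrib_left sum_distrib_right sum_divide_distrib mult_ac)
    also have "\<dots> = (\<Sum>b'<dB. \<Sum>j<dB. w b' * (cnj (\<xi> j b') * \<xi> j b))"
      by (rule sum.swap)
    also have "\<dots> = (\<Sum>b'<dB. w b' * (if b' = b then 1 else 0))"
      using onb_complete[OF xi_onb] b by (intro sum.cong refl) (simp add: sum_distrib_left[symmetric])
    also have "\<dots> = w b" using b by (simp add: if_distrib cong: if_cong)
    finally show ?thesis .
  qed
  define y where "y = (\<lambda>k a. \<Sum>b<dB. \<psi> a b * cnj (\<eta> k b))"
  have uy: "(\<Sum>a<dA. u a * y i a) = 1" if "i < dB" for i
  proof -
    have "(\<Sum>a<dA. u a * y i a) = (\<Sum>a<dA. \<Sum>b<dB. u a * \<psi> a b * cnj (\<eta> i b))"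
      unfolding y_def by (simp add: sum_distrib_left mult_ac)
    also have "\<dots> = (\<Sum>b<dB. \<Sum>a<dA. u a * \<psi> a b * cnj (\<eta> i b))" by (rule sum.swap)
    also have "\<dots> = (\<Sum>b<dB. w b * cnj (\<eta> i b))"
      using key by (intro sum.cong refl) (simp add: sum_distrib_right[symmetric])
    also have "\<dots> = 1" using c1 that .
    finally show ?thesis .
  qed
  define K where "K = (\<Sum>a<dA. (cmod (u a))^2)"
  have K0: "K \<ge> 0" unfolding K_def by (simp add: sum_nonneg)
  have Kpos: "K > 0"
  proof (rule ccontr)
    assume "\<not> K > 0"
    then have "K = 0" using K0 by simp
    then have "\<forall>a\<in>{..<dA}. (cmod (u a))^2 = 0" unfolding K_def
      by (subst sum_nonneg_eq_0_iff[symmetric]) auto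
    then have "\<forall>a<dA. u a = 0" by simp
    then have "(\<Sum>a<dA. u a * y 0 a) = 0" by simp
    with uy[OF dpos] show False by simp
  qed
  define M where "M = (\<lambda>a a'. cnj (u a) * u a' / of_real K)"
  have povm: "povm_element dA M" unfolding M_def by (rule povm_rank1[OF K_def Kpos])
  define X where "X = steered_unnorm dA M (proj_pure \<psi>)"
  have m: "mat_elem dB (\<eta> i) X (\<eta> j) = 1 / of_real K" if "i < dB" "j < dB" for i j
  proof -
    have "mat_elem dB (\<eta> i) X (\<eta> j) = Bf dA M (y j) (y i)"
      unfolding X_def y_def by (rule mat_elem_steered)
    also have "\<dots> = cnj (\<Sum>a<dA. u a * y j a) * (\<Sum>a<dA. u a * y i a) / of_real K"
      unfolding M_def by (rule Bf_rank1)
    also have "\<dots> = 1 / of_real K" using uy that by simp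
    finally show ?thesis .
  qed
  have l1: "l1_coh dB X \<eta> = real dB * (real dB - 1) / K"
  proof -
    have "l1_coh dB X \<eta> = (\<Sum>i<dB. \<Sum>j<dB. if i \<noteq> j then 1 / K else 0)"
      unfolding l1_coh_def using m Kpos by (intro sum.cong refl) (simp add: norm_divide)
    also have "\<dots> = (\<Sum>i<dB. real dB / K - 1 / K)"
      by (intro sum.cong refl) (simp add: offdiag_row[of _ _ "\<lambda>j. 1 / K"])
    also have "\<dots> = real dB * (real dB - 1) / K" using Kpos by (simp add: field_simps)
    finally show ?thesis .
  qed
  have pr: "prob_M dA dB M (proj_pure \<psi>) = real dB / K"
  proof -
    have "prob_M dA dB M (proj_pure \<psi>) = Re (\<Sum>i<dB. mat_elem dB (\<eta> i) X (\<eta> i))"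
      unfolding prob_M_def trace_inv[OF onb] X_def ..
    also have "\<dots> = Re (\<Sum>i<dB. 1 / of_real K)" using m by simp
    also have "\<dots> = real dB / K" by simp
    finally show ?thesis .
  qed
  show ?thesis
  proof (intro exI conjI)
    show "povm_element dA M" by (rule povm)
    show "0 < prob_M dA dB M (proj_pure \<psi>)" unfolding pr using Kpos dpos by simp
    show "l1_coh dB (steered_unnorm dA M (proj_pure \<psi>)) \<eta> / prob_M dA dB M (proj_pure \<psi>) = real dB - 1"
      unfolding X_def[symmetric] l1 pr using Kpos dpos by (simp add: field_simps)
  qed
qed




lemma eigen:
  assumes phi_on: "orthonormal_family dA dB \<phi>"
    and xi_onb: "orthonormal_family dB dB \<xi>"
    and schmidt: "\<forall>a<dA. \<forall>b<dB. \<psi> a b = (\<Sum>i<dB. complex_of_real (lam i) * \<phi> i a * \<xi> i b)"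
  shows "orthonormal_eigenbasis dB (ptrace_A dA (proj_pure \<psi>)) \<xi>"
  unfolding orthonormal_eigenbasis_def
proof (intro conjI allI impI)
  show "orthonormal_family dB dB \<xi>" by (rule xi_onb)
  fix k assume k: "k < dB"
  have inner1: "(\<Sum>b'<dB. cnj (\<psi> a b') * \<xi> k b') = of_real (lam k) * cnj (\<phi> k a)" if a: "a < dA" for a
  proof -
    have "(\<Sum>b'<dB. cnj (\<psi> a b') * \<xi> k b') = (\<Sum>b'<dB. \<Sum>i<dB. of_real (lam i) * cnj (\<phi> i a) * (cnj (\<xi> i b') * \<xi> k b'))"
      using schmidt a by (intro sum.cong refl) (simp add: sum_distrib_left sum_distrib_right mult_ac)
    also have "\<dots> = (\<Sum>i<dB. \<Sum>b'<dB. of_real (lam i) * cnj (\<phi> i a) * (cnj (\<xi> i b') * \<xi> k b'))"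
      by (rule sum.swap)
    also have "\<dots> = (\<Sum>i<dB. of_real (lam i) * cnj (\<phi> i a) * inner_vec dB (\<xi> i) (\<xi> k))"
      unfolding inner_vec_def by (simp add: sum_distrib_left)
    also have "\<dots> = (\<Sum>i<dB. if i = k then of_real (lam i) * cnj (\<phi> i a) else 0)"
      using xi_onb k unfolding orthonormal_family_def by (intro sum.cong refl) auto
    also have "\<dots> = of_real (lam k) * cnj (\<phi> k a)" using k by simp
    finally show ?thesis .
  qed
  show "\<exists>\<mu>. \<forall>b<dB. (\<Sum>b'<dB. ptrace_A dA (proj_pure \<psi>) b b' * \<xi> k b') = \<mu> * \<xi> k b"
  proof (intro exI allI impI)
    fix b assume b: "b < dB"
    have "(\<Sum>b'<dB. ptrace_A dA (proj_pure \<psi>) b b' * \<xi> k b') = (\<Sum>b'<dB. \<Sum>a<dA. \<psi> a b * (cnj (\<psi> a b') * \<xi> k b'))"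
      unfolding ptrace_A_def proj_pure_def by (simp add: sum_distrib_left sum_distrib_right mult_ac)
    also have "\<dots> = (\<Sum>a<dA. \<Sum>b'<dB. \<psi> a b * (cnj (\<psi> a b') * \<xi> k b'))" by (rule sum.swap)
    also have "\<dots> = (\<Sum>a<dA. \<psi> a b * (of_real (lam k) * cnj (\<phi> k a)))"
      using inner1 by (intro sum.cong refl) (simp add: sum_distrib_left[symmetric])
    also have "\<dots> = (\<Sum>a<dA. \<Sum>i<dB. of_real (lam k) * of_real (lam i) * \<xi> i b * (cnj (\<phi> k a) * \<phi> i a))"
      using schmidt b by (intro sum.cong refl) (simp add: sum_distrib_left sum_distrib_right mult_ac)
    also have "\<dots> = (\<Sum>i<dB. \<Sum>a<dA. of_real (lam k) * of_real (lam i) * \<xi> i b * (cnj (\<phi> k a) * \<phi> i a))"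
      by (rule sum.swap)
    also have "\<dots> = (\<Sum>i<dB. of_real (lam k) * of_real (lam i) * \<xi> i b * inner_vec dA (\<phi> k) (\<phi> i))"
      unfolding inner_vec_def by (simp add: sum_distrib_left)
    also have "\<dots> = (\<Sum>i<dB. if k = i then of_real (lam k) * of_real (lam i) * \<xi> i b else 0)"
      using phi_on k unfolding orthonormal_family_def by (intro sum.cong refl) auto
    also have "\<dots> = (of_real (lam k) * of_real (lam k)) * \<xi> k b" using k by simp
    finally show "(\<Sum>b'<dB. ptrace_A dA (proj_pure \<psi>) b b' * \<xi> k b') = (of_real (lam k) * of_real (lam k)) * \<xi> k b" .
  qed
qed

theorem mainTheorem2:
  fixes dA dB :: nat
    and lam :: "nat \<Rightarrow> real"
    and \<phi> \<xi> :: "nat \<Rightarrow> nat \<Rightarrow> complex"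
    and \<psi> :: "nat \<Rightarrow> nat \<Rightarrow> complex"
  assumes phi_on: "orthonormal_family dA dB \<phi>"
    and xi_onb: "orthonormal_family dB dB \<xi>"
    and lam_nz: "\<forall>i<dB. lam i \<noteq> 0"
    and normalized: "(\<Sum>i<dB. (lam i)\<^sup>2) = 1"
    and schmidt: "\<forall>a<dA. \<forall>b<dB. \<psi> a b = (\<Sum>i<dB. complex_of_real (lam i) * \<phi> i a * \<xi> i b)"
  shows "max_steered_coherence dA dB (proj_pure \<psi>) = real dB - 1"
proof -
  have dpos: "0 < dB" using normalized by (cases dB) auto
  define E where "E = {\<eta>. orthonormal_eigenbasis dB (ptrace_A dA (proj_pure \<psi>)) \<eta>}"
  have E: "E \<noteq> {}" using eigen[OF phi_on xi_onb schmidt] unfolding E_def by blast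
  have S: "(SUP M \<in> {M. povm_element dA M \<and> prob_M dA dB M (proj_pure \<psi>) > 0}.
          l1_coh dB (steered_unnorm dA M (proj_pure \<psi>)) \<eta> / prob_M dA dB M (proj_pure \<psi>)) = real dB - 1"
    if "\<eta> \<in> E" for \<eta>
  proof (rule cSup_eq_maximum)
    have onb: "orthonormal_family dB dB \<eta>" using that unfolding E_def orthonormal_eigenbasis_def by blast
    from attain[OF phi_on xi_onb lam_nz schmidt onb dpos] obtain M where
      "povm_element dA M" "0 < prob_M dA dB M (proj_pure \<psi>)"
      "l1_coh dB (steered_unnorm dA M (proj_pure \<psi>)) \<eta> / prob_M dA dB M (proj_pure \<psi>) = real dB - 1"
      by blast
    then show "real dB - 1 \<in> (\<lambda>M. l1_coh dB (steered_unnorm dA M (proj_pure \<psi>)) \<eta> / prob_M dA dB M (proj_pure \<psi>)) `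
        {M. povm_element dA M \<and> prob_M dA dB M (proj_pure \<psi>) > 0}"
      by (metis (mono_tags, lifting) image_eqI mem_Collect_eq)
    fix x assume "x \<in> (\<lambda>M. l1_coh dB (steered_unnorm dA M (proj_pure \<psi>)) \<eta> / prob_M dA dB M (proj_pure \<psi>)) `
        {M. povm_element dA M \<and> prob_M dA dB M (proj_pure \<psi>) > 0}"
    then obtain M where M: "povm_element dA M" "prob_M dA dB M (proj_pure \<psi>) > 0"
      and x: "x = l1_coh dB (steered_unnorm dA M (proj_pure \<psi>)) \<eta> / prob_M dA dB M (proj_pure \<psi>)"
      by blast
    have "l1_coh dB (steered_unnorm dA M (proj_pure \<psi>)) \<eta> \<le> (real dB - 1) * prob_M dA dB M (proj_pure \<psi>)"
      by (rule upper_bound[OF onb M(1)])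
    then show "x \<le> real dB - 1" unfolding x using M(2) by (simp add: pos_divide_le_eq)
  qed
  have "max_steered_coherence dA dB (proj_pure \<psi>) = (INF \<eta>\<in>E. real dB - 1)"
    unfolding max_steered_coherence_def E_def[symmetric] using S by (intro INF_cong refl) auto
  also have "\<dots> = real dB - 1" using E by simp
  finally show ?thesis .
qed

end
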